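(* Let $(V,L,\varphi,E)$ be a valuation system. Then $\varphi$ is extendible if and only if $\varphi$ is $\Pi_{\aleph_1}$-extendible. Moreover, if $\varphi$ is extendible, then $\overline\varphi=\Pi_{\aleph_1}\varphi$.
   Context: $\aleph_1$ denotes the smallest uncountable ordinal. A valuation system $(V,L,\varphi,E)$ consists of: (i) a lattice $V$ which is $\sigma$-distributive (for every $a\in V$ and sequence $(b_n)$ with existing infimum, $\bigwedge_n(a\vee b_n)$ exists and equals $a\vee\bigwedge_n b_n$, and dually for suprema); (ii) a sublattice $L$ of $V$; (iii) a partially ordered abelian group $E$ which is R-complete (whenever $x_1\ge x_2\ge\cdots$ and $y_1\ge y_2\ge\cdots$ in $E$ are such that $\bigwedge_n(x_n+y_n)$ exists, $\bigwedge_n x_n$ and $\bigwedge_n y_n$ exist; dually for increasing sequences); (iv) a valuation $\varphi:L\to E$ (order-preserving, $\varphi(a\wedge b)+\varphi(a\vee b)=\varphi(a)+\varphi(b)$). A decreasing (resp. increasing) sequence $(a_n)$ in $L$ is $\varphi$-convergent if $\bigwedge_n a_n$ exists in $V$ and $\bigwedge_n\varphi(a_n)$ exists in $E$ (resp. with suprema). $\Pi L:=\{\bigwedge_n a_n:(a_n)\ \varphi\text{-convergent decreasing}\}$ and $\varphi$ is $\Pi$-extendible if there is a valuation $\Pi\varphi:\Pi L\to E$ with $\Pi\varphi(\bigwedge_n a_n)=\bigwedge_n\varphi(a_n)$ for all such sequences; $\Sigma L,\Sigma$-extendible, $\Sigma\varphi$ dually. Hierarchy (transfinite recursion): $\Pi_0\varphi=\Sigma_0\varphi=\varphi$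 on $L$; $\varphi$ is $\Pi_{\alpha+1}$-extendible iff it is $\Sigma_\alpha$-extendible and $\Sigma_\alpha\varphi$ is $\Pi$-extendible, with $\Pi_{\alpha+1}\varphi=\Pi(\Sigma_\alpha\varphi)$ on $\Pi(\Sigma_\alpha L)$; $\varphi$ is $\Sigma_{\alpha+1}$-extendible iff it is $\Pi_\alpha$-extendible and $\Pi_\alpha\varphi$ is $\Sigma$-extendible, with $\Sigma_{\alpha+1}\varphi=\Sigma(\Pi_\alpha\varphi)$; at a limit $\lambda$, $\varphi$ is $\Pi_\lambda$-extendible iff $\Pi_\alpha$-extendible for all $\alpha<\lambda$, and then $\Pi_\lambda\varphi$ is the common extension of the $\Pi_\alpha\varphi$ ($\alpha<\lambda$) on $\bigcup_{\alpha<\lambda}\Pi_\alpha L$; similarly $\Sigma_\lambda$. The hierarchy has collapsed at $Q$, where $Q=\Pi_\alpha\varphi$ or $Q=\Sigma_\alpha\varphi$, if $\varphi$ is $\Pi_{\alpha+1}$- and $\Sigma_{\alpha+1}$-extendible and $\Pi(Q)=Q=\Sigma(Q)$. $\varphi$ is extendible if the hierarchy has collapsed at some $Q$; this $Q$ is then unique and denoted $\overline\varphi$. *)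

theory Defs
  imports Main "HOL-Library.Countable_Set"
begin

definition inf_of :: "(nat \<Rightarrow> 'a::order) \<Rightarrow> 'a \<Rightarrow> bool" where
  "inf_of a x \<longleftrightarrow> (\<forall>n. x \<le> a n) \<and> (\<forall>y. (\<forall>n. y \<le> a n) \<longrightarrow> y \<le> x)"

definition sup_of :: "(nat \<Rightarrow> 'a::order) \<Rightarrow> 'a \<Rightarrow> bool" where
  "sup_of a x \<longleftrightarrow> (\<forall>n. a n \<le> x) \<and> (\<forall>y. (\<forall>n. a n \<le> y) \<longrightarrow> x \<le> y)"

definition sigma_distributive :: "'v::lattice itself \<Rightarrow> bool" where
  "sigma_distributive _ \<longleftrightarrow>
     (\<forall>(a::'v) b x. inf_of b x \<longrightarrow> inf_of (\<lambda>n. sup a (b n)) (sup a x)) \<and>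
     (\<forall>(a::'v) b x. sup_of b x \<longrightarrow> sup_of (\<lambda>n. inf a (b n)) (inf a x))"

definition sublattice :: "'v::lattice set \<Rightarrow> bool" where
  "sublattice L \<longleftrightarrow> (\<forall>a\<in>L. \<forall>b\<in>L. inf a b \<in> L \<and> sup a b \<in> L)"

definition R_complete :: "'e::ordered_ab_group_add itself \<Rightarrow> bool" where
  "R_complete _ \<longleftrightarrow>
     (\<forall>(x::nat \<Rightarrow> 'e) y. (\<forall>n. x (Suc n) \<le> x n) \<and> (\<forall>n. y (Suc n) \<le> y n) \<and>
        (\<exists>s. inf_of (\<lambda>n. x n + y n) s) \<longrightarrow> (\<exists>s. inf_of x s) \<and> (\<exists>s. inf_of y s)) \<and>
     (\<forall>(x::nat \<Rightarrow> 'e) y. (\<forall>n. x n \<le> x (Suc n)) \<and> (\<forall>n. y n \<le> y (Suc n)) \<and>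
        (\<exists>s. sup_of (\<lambda>n. x n + y n) s) \<longrightarrow> (\<exists>s. sup_of x s) \<and> (\<exists>s. sup_of y s))"

definition valuation_on :: "'v::lattice set \<Rightarrow> ('v \<Rightarrow> 'e::ordered_ab_group_add) \<Rightarrow> bool" where
  "valuation_on D f \<longleftrightarrow> sublattice D \<and>
     (\<forall>a\<in>D. \<forall>b\<in>D. a \<le> b \<longrightarrow> f a \<le> f b) \<and>
     (\<forall>a\<in>D. \<forall>b\<in>D. f (inf a b) + f (sup a b) = f a + f b)"

definition conv_dec :: "'v::lattice set \<Rightarrow> ('v \<Rightarrow> 'e::ordered_ab_group_add) \<Rightarrow> (nat \<Rightarrow> 'v) \<Rightarrow> bool" where
  "conv_dec D f a \<longleftrightarrow> (\<forall>n. a n \<in> D \<and> a (Suc n) \<le> a n) \<and>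
     (\<exists>x. inf_of a x) \<and> (\<exists>e. inf_of (\<lambda>n. f (a n)) e)"

definition conv_inc :: "'v::lattice set \<Rightarrow> ('v \<Rightarrow> 'e::ordered_ab_group_add) \<Rightarrow> (nat \<Rightarrow> 'v) \<Rightarrow> bool" where
  "conv_inc D f a \<longleftrightarrow> (\<forall>n. a n \<in> D \<and> a n \<le> a (Suc n)) \<and>
     (\<exists>x. sup_of a x) \<and> (\<exists>e. sup_of (\<lambda>n. f (a n)) e)"

definition PiDom :: "'v::lattice set \<Rightarrow> ('v \<Rightarrow> 'e::ordered_ab_group_add) \<Rightarrow> 'v set" where
  "PiDom D f = {x. \<exists>a. conv_dec D f a \<and> inf_of a x}"

definition SigDom :: "'v::lattice set \<Rightarrow> ('v \<Rightarrow> 'e::ordered_ab_group_add) \<Rightarrow> 'v set" where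
  "SigDom D f = {x. \<exists>a. conv_inc D f a \<and> sup_of a x}"

definition Pi_ext_prop :: "'v::lattice set \<Rightarrow> ('v \<Rightarrow> 'e::ordered_ab_group_add) \<Rightarrow> ('v \<Rightarrow> 'e) \<Rightarrow> bool" where
  "Pi_ext_prop D f g \<longleftrightarrow> valuation_on (PiDom D f) g \<and>
     (\<forall>a x e. conv_dec D f a \<longrightarrow> inf_of a x \<longrightarrow> inf_of (\<lambda>n. f (a n)) e \<longrightarrow> g x = e)"

definition Sig_ext_prop :: "'v::lattice set \<Rightarrow> ('v \<Rightarrow> 'e::ordered_ab_group_add) \<Rightarrow> ('v \<Rightarrow> 'e) \<Rightarrow> bool" where
  "Sig_ext_prop D f g \<longleftrightarrow> valuation_on (SigDom D f) g \<and>
     (\<forall>a x e. conv_inc D f a \<longrightarrow> sup_of a x \<longrightarrow> sup_of (\<lambda>n. f (a n)) e \<longrightarrow> g x = e)"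

definition Pi_extendible :: "'v::lattice set \<Rightarrow> ('v \<Rightarrow> 'e::ordered_ab_group_add) \<Rightarrow> bool" where
  "Pi_extendible D f \<longleftrightarrow> (\<exists>g. Pi_ext_prop D f g)"

definition Sig_extendible :: "'v::lattice set \<Rightarrow> ('v \<Rightarrow> 'e::ordered_ab_group_add) \<Rightarrow> bool" where
  "Sig_extendible D f \<longleftrightarrow> (\<exists>g. Sig_ext_prop D f g)"

definition PiFun :: "'v::lattice set \<Rightarrow> ('v \<Rightarrow> 'e::ordered_ab_group_add) \<Rightarrow> 'v \<Rightarrow> 'e" where
  "PiFun D f = (SOME g. Pi_ext_prop D f g)"

definition SigFun :: "'v::lattice set \<Rightarrow> ('v \<Rightarrow> 'e::ordered_ab_group_add) \<Rightarrow> 'v \<Rightarrow> 'e" where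
  "SigFun D f = (SOME g. Sig_ext_prop D f g)"

text \<open>A level is a triple (extendibility flag, domain, valuation).\<close>
type_synonym ('v, 'e) level = "bool \<times> 'v set \<times> ('v \<Rightarrow> 'e)"

definition ok_of :: "('v, 'e) level \<Rightarrow> bool" where "ok_of Q = fst Q"
definition dom_of :: "('v, 'e) level \<Rightarrow> 'v set" where "dom_of Q = fst (snd Q)"
definition fun_of :: "('v, 'e) level \<Rightarrow> 'v \<Rightarrow> 'e" where "fun_of Q = snd (snd Q)"

definition PiStep :: "('v::lattice, 'e::ordered_ab_group_add) level \<Rightarrow> ('v, 'e) level" where
  "PiStep Q = (ok_of Q \<and> Pi_extendible (dom_of Q) (fun_of Q),
               PiDom (dom_of Q) (fun_of Q), PiFun (dom_of Q) (fun_of Q))"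

definition SigStep :: "('v::lattice, 'e::ordered_ab_group_add) level \<Rightarrow> ('v, 'e) level" where
  "SigStep Q = (ok_of Q \<and> Sig_extendible (dom_of Q) (fun_of Q),
               SigDom (dom_of Q) (fun_of Q), SigFun (dom_of Q) (fun_of Q))"

definition lim_level :: "('i::wellorder \<Rightarrow> ('v, 'e) level) \<Rightarrow> 'i \<Rightarrow> ('v, 'e) level" where
  "lim_level G \<alpha> = ((\<forall>\<beta><\<alpha>. ok_of (G \<beta>)),
                     (\<Union>\<beta>\<in>{\<beta>. \<beta> < \<alpha>}. dom_of (G \<beta>)),
                     (\<lambda>x. fun_of (G (SOME \<beta>. \<beta> < \<alpha> \<and> x \<in> dom_of (G \<beta>))) x))"

definition is_zero :: "'i::wellorder \<Rightarrow> bool" where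
  "is_zero \<alpha> \<longleftrightarrow> (\<forall>\<beta>. \<not> \<beta> < \<alpha>)"

definition succ_of :: "'i::wellorder \<Rightarrow> 'i \<Rightarrow> bool" where
  "succ_of \<beta> \<alpha> \<longleftrightarrow> \<beta> < \<alpha> \<and> \<not> (\<exists>\<gamma>. \<beta> < \<gamma> \<and> \<gamma> < \<alpha>)"

definition hier_step :: "'v::lattice set \<Rightarrow> ('v \<Rightarrow> 'e::ordered_ab_group_add) \<Rightarrow>
    ('i::wellorder \<Rightarrow> ('v, 'e) level \<times> ('v, 'e) level) \<Rightarrow> 'i \<Rightarrow> ('v, 'e) level \<times> ('v, 'e) level" where
  "hier_step L \<phi> h \<alpha> =
     (if is_zero \<alpha> then ((True, L, \<phi>), (True, L, \<phi>))
      else if (\<exists>\<beta>. succ_of \<beta> \<alpha>) then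
        (let \<beta> = (SOME \<beta>. succ_of \<beta> \<alpha>) in (PiStep (snd (h \<beta>)), SigStep (fst (h \<beta>))))
      else (lim_level (\<lambda>\<beta>. fst (h \<beta>)) \<alpha>, lim_level (\<lambda>\<beta>. snd (h \<beta>)) \<alpha>))"

definition hier :: "'v::lattice set \<Rightarrow> ('v \<Rightarrow> 'e::ordered_ab_group_add) \<Rightarrow>
    'i::wellorder \<Rightarrow> ('v, 'e) level \<times> ('v, 'e) level" where
  "hier L \<phi> = wfrec {(x, y). x < y} (hier_step L \<phi>)"

definition PiH :: "'v::lattice set \<Rightarrow> ('v \<Rightarrow> 'e::ordered_ab_group_add) \<Rightarrow> 'i::wellorder \<Rightarrow> ('v, 'e) level" where
  "PiH L \<phi> \<alpha> = fst (hier L \<phi> \<alpha>)"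

definition SigH :: "'v::lattice set \<Rightarrow> ('v \<Rightarrow> 'e::ordered_ab_group_add) \<Rightarrow> 'i::wellorder \<Rightarrow> ('v, 'e) level" where
  "SigH L \<phi> \<alpha> = snd (hier L \<phi> \<alpha>)"

text \<open>The hierarchy has collapsed at Q (= Pi_alpha or Sigma_alpha).
  PiStep (SigH alpha) is Pi_{alpha+1}, SigStep (PiH alpha) is Sigma_{alpha+1}.\<close>
definition collapsed_at :: "'v::lattice set \<Rightarrow> ('v \<Rightarrow> 'e::ordered_ab_group_add) \<Rightarrow> 'i::wellorder \<Rightarrow>
    ('v, 'e) level \<Rightarrow> bool" where
  "collapsed_at L \<phi> \<alpha> Q \<longleftrightarrow>
     ok_of (PiStep (SigH L \<phi> \<alpha>)) \<and> ok_of (SigStep (PiH L \<phi> \<alpha>)) \<and>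
     (Q = PiH L \<phi> \<alpha> \<or> Q = SigH L \<phi> \<alpha>) \<and>
     Pi_extendible (dom_of Q) (fun_of Q) \<and> Sig_extendible (dom_of Q) (fun_of Q) \<and>
     PiDom (dom_of Q) (fun_of Q) = dom_of Q \<and>
     (\<forall>x\<in>dom_of Q. PiFun (dom_of Q) (fun_of Q) x = fun_of Q x) \<and>
     SigDom (dom_of Q) (fun_of Q) = dom_of Q \<and>
     (\<forall>x\<in>dom_of Q. SigFun (dom_of Q) (fun_of Q) x = fun_of Q x)"

text \<open>w plays the role of aleph_1 in the index well-order: uncountably many predecessors,
  each of which has countably many predecessors.\<close>
definition is_aleph1 :: "'i::wellorder \<Rightarrow> bool" where
  "is_aleph1 w \<longleftrightarrow> uncountable {j. j < w} \<and> (\<forall>j<w. countable {k. k < j})"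

end

theory Submission
  imports Defs
begin

lemma hier_cut:
  fixes L :: "'v::lattice set" and \<phi> :: "'v \<Rightarrow> 'e::ordered_ab_group_add" and \<alpha> :: "'i::wellorder"
  shows "hier L \<phi> \<alpha> = hier_step L \<phi> (cut (hier L \<phi>) {(x,y). x<y} \<alpha>) \<alpha>"
  unfolding hier_def by (rule wfrec[OF wf])

lemma H_zero:
  fixes \<alpha> :: "'i::wellorder"
  shows "is_zero \<alpha> \<Longrightarrow> PiH L \<phi> \<alpha> = (True, L, \<phi>) \<and> SigH L \<phi> \<alpha> = (True, L, \<phi>)"
  by (simp add: PiH_def SigH_def hier_cut[of L \<phi> \<alpha>] hier_step_def)

lemma succ_unique: "succ_of (\<beta>::'i::wellorder) \<alpha> \<Longrightarrow> succ_of \<beta>' \<alpha> \<Longrightarrow> \<beta> = \<beta>'"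
  unfolding succ_of_def by (metis neq_iff)

lemma succ_unique2: "succ_of (\<beta>::'i::wellorder) \<alpha> \<Longrightarrow> succ_of \<beta> \<alpha>' \<Longrightarrow> \<alpha> = \<alpha>'"
  unfolding succ_of_def by (metis neq_iff)

lemma H_succ:
  fixes \<alpha> :: "'i::wellorder"
  assumes "succ_of \<beta> \<alpha>"
  shows "PiH L \<phi> \<alpha> = PiStep (SigH L \<phi> \<beta>) \<and> SigH L \<phi> \<alpha> = SigStep (PiH L \<phi> \<beta>)"
proof -
  have lt: "\<beta> < \<alpha>" using assms unfolding succ_of_def by auto
  hence nz: "\<not> is_zero \<alpha>" unfolding is_zero_def by auto
  have so: "(SOME \<beta>. succ_of \<beta> \<alpha>) = \<beta>" using assms succ_unique by blast
  show ?thesis using assms nz lt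
    by (simp add: PiH_def SigH_def hier_cut[of L \<phi> \<alpha>] hier_step_def so cut_apply Let_def, blast)
qed

definition lim_ord :: "'i::wellorder \<Rightarrow> bool" where
  "lim_ord \<alpha> \<longleftrightarrow> \<not> is_zero \<alpha> \<and> \<not> (\<exists>\<beta>. succ_of \<beta> \<alpha>)"

lemma lim_props:
  fixes \<alpha> :: "'i::wellorder"
  assumes "\<forall>\<beta><\<alpha>. G \<beta> = G' \<beta>"
  shows "ok_of (lim_level G \<alpha>) = (\<forall>\<beta><\<alpha>. ok_of (G' \<beta>)) \<and>
    dom_of (lim_level G \<alpha>) = (\<Union>\<beta>\<in>{\<beta>. \<beta><\<alpha>}. dom_of (G' \<beta>)) \<and>
    (\<forall>x\<in>dom_of (lim_level G \<alpha>). \<exists>\<beta><\<alpha>. x \<in> dom_of (G' \<beta>) \<and> fun_of (lim_level G \<alpha>) x = fun_of (G' \<beta>) x)"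
proof (intro conjI ballI)
  show "ok_of (lim_level G \<alpha>) = (\<forall>\<beta><\<alpha>. ok_of (G' \<beta>))"
    using assms by (simp add: lim_level_def ok_of_def)
  show "dom_of (lim_level G \<alpha>) = (\<Union>\<beta>\<in>{\<beta>. \<beta><\<alpha>}. dom_of (G' \<beta>))"
    using assms by (simp add: lim_level_def dom_of_def)
  fix x assume "x \<in> dom_of (lim_level G \<alpha>)"
  hence ex: "\<exists>\<beta>. \<beta> < \<alpha> \<and> x \<in> dom_of (G \<beta>)" by (simp add: lim_level_def dom_of_def)
  let ?b = "SOME \<beta>. \<beta> < \<alpha> \<and> x \<in> dom_of (G \<beta>)"
  have b: "?b < \<alpha> \<and> x \<in> dom_of (G ?b)" using someI_ex[OF ex] .
  have "fun_of (lim_level G \<alpha>) x = fun_of (G ?b) x" by (simp add: lim_level_def fun_of_def)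
  thus "\<exists>\<beta><\<alpha>. x \<in> dom_of (G' \<beta>) \<and> fun_of (lim_level G \<alpha>) x = fun_of (G' \<beta>) x"
    using b assms by metis
qed

lemma H_lim:
  fixes \<alpha> :: "'i::wellorder"
  assumes "lim_ord \<alpha>"
  shows "ok_of (PiH L \<phi> \<alpha>) = (\<forall>\<beta><\<alpha>. ok_of (PiH L \<phi> \<beta>)) \<and>
    dom_of (PiH L \<phi> \<alpha>) = (\<Union>\<beta>\<in>{\<beta>. \<beta><\<alpha>}. dom_of (PiH L \<phi> \<beta>)) \<and>
    (\<forall>x\<in>dom_of (PiH L \<phi> \<alpha>). \<exists>\<beta><\<alpha>. x \<in> dom_of (PiH L \<phi> \<beta>) \<and> fun_of (PiH L \<phi> \<alpha>) x = fun_of (PiH L \<phi> \<beta>) x)"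
  and "ok_of (SigH L \<phi> \<alpha>) = (\<forall>\<beta><\<alpha>. ok_of (SigH L \<phi> \<beta>)) \<and>
    dom_of (SigH L \<phi> \<alpha>) = (\<Union>\<beta>\<in>{\<beta>. \<beta><\<alpha>}. dom_of (SigH L \<phi> \<beta>)) \<and>
    (\<forall>x\<in>dom_of (SigH L \<phi> \<alpha>). \<exists>\<beta><\<alpha>. x \<in> dom_of (SigH L \<phi> \<beta>) \<and> fun_of (SigH L \<phi> \<alpha>) x = fun_of (SigH L \<phi> \<beta>) x)"
proof -
  let ?c = "cut (hier L \<phi>) {(x,y). x<y} \<alpha>"
  have h: "hier L \<phi> \<alpha> = (lim_level (\<lambda>\<beta>. fst (?c \<beta>)) \<alpha>, lim_level (\<lambda>\<beta>. snd (?c \<beta>)) \<alpha>)"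
    using assms by (simp add: hier_cut[of L \<phi> \<alpha>] hier_step_def lim_ord_def)
  have a1: "\<forall>\<beta><\<alpha>. fst (?c \<beta>) = PiH L \<phi> \<beta>" by (simp add: cut_apply PiH_def)
  have a2: "\<forall>\<beta><\<alpha>. snd (?c \<beta>) = SigH L \<phi> \<beta>" by (simp add: cut_apply SigH_def)
  show "ok_of (PiH L \<phi> \<alpha>) = (\<forall>\<beta><\<alpha>. ok_of (PiH L \<phi> \<beta>)) \<and>
    dom_of (PiH L \<phi> \<alpha>) = (\<Union>\<beta>\<in>{\<beta>. \<beta><\<alpha>}. dom_of (PiH L \<phi> \<beta>)) \<and>
    (\<forall>x\<in>dom_of (PiH L \<phi> \<alpha>). \<exists>\<beta><\<alpha>. x \<in> dom_of (PiH L \<phi> \<beta>) \<and> fun_of (PiH L \<phi> \<alpha>) x = fun_of (PiH L \<phi> \<beta>) x)"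
    using lim_props[OF a1] h by (simp add: PiH_def[of L \<phi> \<alpha>])
  show "ok_of (SigH L \<phi> \<alpha>) = (\<forall>\<beta><\<alpha>. ok_of (SigH L \<phi> \<beta>)) \<and>
    dom_of (SigH L \<phi> \<alpha>) = (\<Union>\<beta>\<in>{\<beta>. \<beta><\<alpha>}. dom_of (SigH L \<phi> \<beta>)) \<and>
    (\<forall>x\<in>dom_of (SigH L \<phi> \<alpha>). \<exists>\<beta><\<alpha>. x \<in> dom_of (SigH L \<phi> \<beta>) \<and> fun_of (SigH L \<phi> \<alpha>) x = fun_of (SigH L \<phi> \<beta>) x)"
    using lim_props[OF a2] h by (simp add: SigH_def[of L \<phi> \<alpha>])
qed

lemma ord_cases:
  fixes \<alpha> :: "'i::wellorder"
  obtains "is_zero \<alpha>" | \<beta> where "succ_of \<beta> \<alpha>" | "lim_ord \<alpha>"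
  unfolding lim_ord_def by blast

lemma exists_succ:
  fixes \<delta> :: "'i::wellorder"
  assumes "\<delta> < \<gamma>"
  shows "\<exists>s. succ_of \<delta> s \<and> s \<le> \<gamma>"
proof -
  let ?s = "LEAST s. \<delta> < s"
  have 1: "\<delta> < ?s" using LeastI[of "\<lambda>s. \<delta> < s", OF assms] .
  have 2: "?s \<le> \<gamma>" using Least_le[of "\<lambda>s. \<delta> < s", OF assms] .
  have "\<not> (\<exists>c. \<delta> < c \<and> c < ?s)" using not_less_Least by blast
  thus ?thesis using 1 2 unfolding succ_of_def by blast
qed

lemma lim_succ:
  fixes \<delta> :: "'i::wellorder"
  assumes "lim_ord \<alpha>" "\<delta> < \<alpha>"
  shows "\<exists>s. succ_of \<delta> s \<and> s < \<alpha>"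
proof -
  obtain s where s: "succ_of \<delta> s" "s \<le> \<alpha>" using exists_succ[OF assms(2)] by blast
  have "s \<noteq> \<alpha>" using s(1) assms(1) unfolding lim_ord_def by blast
  thus ?thesis using s by auto
qed

lemma succ_less: "succ_of \<beta> \<alpha> \<Longrightarrow> \<beta> < \<alpha>" unfolding succ_of_def by auto
lemma succ_le: "succ_of (\<beta>::'i::wellorder) \<alpha> \<Longrightarrow> \<gamma> < \<alpha> \<Longrightarrow> \<gamma> \<le> \<beta>"
  unfolding succ_of_def by (metis not_le)
lemma zero_less: "is_zero \<alpha> \<Longrightarrow> \<not> \<beta> < \<alpha>" unfolding is_zero_def by auto

definition sub :: "('v, 'e) level \<Rightarrow> ('v, 'e) level \<Rightarrow> bool" where
  "sub P Q \<longleftrightarrow> dom_of P \<subseteq> dom_of Q \<and> (\<forall>x\<in>dom_of P. fun_of P x = fun_of Q x)"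

lemma sub_refl: "sub P P" unfolding sub_def by auto
lemma sub_trans: "sub P Q \<Longrightarrow> sub Q R \<Longrightarrow> sub P R" unfolding sub_def by (auto simp: subset_iff)

definition eqv :: "('v, 'e) level \<Rightarrow> ('v, 'e) level \<Rightarrow> bool" where
  "eqv P Q \<longleftrightarrow> sub P Q \<and> sub Q P"

lemma inf_of_const: "inf_of (\<lambda>n. x) x" unfolding inf_of_def by auto
lemma sup_of_const: "sup_of (\<lambda>n. x) x" unfolding sup_of_def by auto

lemma conv_dec_cong:
  assumes "\<forall>x\<in>D. f x = g x"
  shows "conv_dec D f a = conv_dec D g a"
proof -
  have "(\<forall>n. a n \<in> D) \<Longrightarrow> (\<lambda>n. f (a n)) = (\<lambda>n. g (a n))" using assms by auto
  thus ?thesis unfolding conv_dec_def by metis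
qed

lemma conv_inc_cong:
  assumes "\<forall>x\<in>D. f x = g x"
  shows "conv_inc D f a = conv_inc D g a"
proof -
  have "(\<forall>n. a n \<in> D) \<Longrightarrow> (\<lambda>n. f (a n)) = (\<lambda>n. g (a n))" using assms by auto
  thus ?thesis unfolding conv_inc_def by metis
qed

lemma PiDom_cong: "\<forall>x\<in>D. f x = g x \<Longrightarrow> PiDom D f = PiDom D g"
  unfolding PiDom_def using conv_dec_cong by metis
lemma SigDom_cong: "\<forall>x\<in>D. f x = g x \<Longrightarrow> SigDom D f = SigDom D g"
  unfolding SigDom_def using conv_inc_cong by metis

lemma Pi_ext_prop_cong:
  assumes "\<forall>x\<in>D. f x = g x"
  shows "Pi_ext_prop D f h = Pi_ext_prop D g h"
proof -
  have "conv_dec D f a \<Longrightarrow> (\<lambda>n. f (a n)) = (\<lambda>n. g (a n))" for a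
    using assms unfolding conv_dec_def by auto
  thus ?thesis unfolding Pi_ext_prop_def using PiDom_cong[OF assms] conv_dec_cong[OF assms]
    by metis
qed

lemma Sig_ext_prop_cong:
  assumes "\<forall>x\<in>D. f x = g x"
  shows "Sig_ext_prop D f h = Sig_ext_prop D g h"
proof -
  have "conv_inc D f a \<Longrightarrow> (\<lambda>n. f (a n)) = (\<lambda>n. g (a n))" for a
    using assms unfolding conv_inc_def by auto
  thus ?thesis unfolding Sig_ext_prop_def using SigDom_cong[OF assms] conv_inc_cong[OF assms]
    by metis
qed

lemma PiStep_cong:
  assumes "dom_of P = dom_of Q" "\<forall>x\<in>dom_of Q. fun_of P x = fun_of Q x"
  shows "dom_of (PiStep P) = dom_of (PiStep Q) \<and> fun_of (PiStep P) = fun_of (PiStep Q) \<and>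
     Pi_extendible (dom_of P) (fun_of P) = Pi_extendible (dom_of Q) (fun_of Q)"
proof -
  have e: "\<And>h. Pi_ext_prop (dom_of P) (fun_of P) h = Pi_ext_prop (dom_of Q) (fun_of Q) h"
    using Pi_ext_prop_cong[of "dom_of Q" "fun_of P" "fun_of Q"] assms by simp
  have "PiDom (dom_of P) (fun_of P) = PiDom (dom_of Q) (fun_of Q)"
    using PiDom_cong[of "dom_of Q" "fun_of P" "fun_of Q"] assms by simp
  thus ?thesis using e by (simp add: PiStep_def dom_of_def fun_of_def PiFun_def Pi_extendible_def)
qed

lemma SigStep_cong:
  assumes "dom_of P = dom_of Q" "\<forall>x\<in>dom_of Q. fun_of P x = fun_of Q x"
  shows "dom_of (SigStep P) = dom_of (SigStep Q) \<and> fun_of (SigStep P) = fun_of (SigStep Q) \<and>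
     Sig_extendible (dom_of P) (fun_of P) = Sig_extendible (dom_of Q) (fun_of Q)"
proof -
  have e: "\<And>h. Sig_ext_prop (dom_of P) (fun_of P) h = Sig_ext_prop (dom_of Q) (fun_of Q) h"
    using Sig_ext_prop_cong[of "dom_of Q" "fun_of P" "fun_of Q"] assms by simp
  have "SigDom (dom_of P) (fun_of P) = SigDom (dom_of Q) (fun_of Q)"
    using SigDom_cong[of "dom_of Q" "fun_of P" "fun_of Q"] assms by simp
  thus ?thesis using e by (simp add: SigStep_def dom_of_def fun_of_def SigFun_def Sig_extendible_def)
qed

lemma PiFun_prop: "Pi_extendible D f \<Longrightarrow> Pi_ext_prop D f (PiFun D f)"
  unfolding Pi_extendible_def PiFun_def by (metis someI_ex)
lemma SigFun_prop: "Sig_extendible D f \<Longrightarrow> Sig_ext_prop D f (SigFun D f)"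
  unfolding Sig_extendible_def SigFun_def by (metis someI_ex)

lemma PiFun_val: "Pi_extendible D f \<Longrightarrow> conv_dec D f a \<Longrightarrow> inf_of a x \<Longrightarrow> inf_of (\<lambda>n. f (a n)) e
   \<Longrightarrow> x \<in> PiDom D f \<and> PiFun D f x = e"
  using PiFun_prop unfolding Pi_ext_prop_def PiDom_def by blast
lemma SigFun_val: "Sig_extendible D f \<Longrightarrow> conv_inc D f a \<Longrightarrow> sup_of a x \<Longrightarrow> sup_of (\<lambda>n. f (a n)) e
   \<Longrightarrow> x \<in> SigDom D f \<and> SigFun D f x = e"
  using SigFun_prop unfolding Sig_ext_prop_def SigDom_def by blast

lemma conv_dec_const: "x \<in> D \<Longrightarrow> conv_dec D f (\<lambda>n. x)"
  unfolding conv_dec_def using inf_of_const[of x] inf_of_const[of "f x"] by auto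
lemma conv_inc_const: "x \<in> D \<Longrightarrow> conv_inc D f (\<lambda>n. x)"
  unfolding conv_inc_def using sup_of_const[of x] sup_of_const[of "f x"] by auto

lemma PiDom_sup: "D \<subseteq> PiDom D f"
  unfolding PiDom_def using conv_dec_const inf_of_const by blast
lemma SigDom_sup: "D \<subseteq> SigDom D f"
  unfolding SigDom_def using conv_inc_const sup_of_const by blast

lemma PiFun_const: "Pi_extendible D f \<Longrightarrow> x \<in> D \<Longrightarrow> PiFun D f x = f x"
  using PiFun_val[OF _ conv_dec_const inf_of_const] inf_of_const by blast
lemma SigFun_const: "Sig_extendible D f \<Longrightarrow> x \<in> D \<Longrightarrow> SigFun D f x = f x"
  using SigFun_val[OF _ conv_inc_const sup_of_const] sup_of_const by blast

lemma ok_PiStep: "ok_of (PiStep Q) = (ok_of Q \<and> Pi_extendible (dom_of Q) (fun_of Q))"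
  by (simp add: PiStep_def ok_of_def)
lemma ok_SigStep: "ok_of (SigStep Q) = (ok_of Q \<and> Sig_extendible (dom_of Q) (fun_of Q))"
  by (simp add: SigStep_def ok_of_def)
lemma dom_PiStep: "dom_of (PiStep Q) = PiDom (dom_of Q) (fun_of Q)"
  by (simp add: PiStep_def dom_of_def)
lemma dom_SigStep: "dom_of (SigStep Q) = SigDom (dom_of Q) (fun_of Q)"
  by (simp add: SigStep_def dom_of_def)
lemma fun_PiStep: "fun_of (PiStep Q) = PiFun (dom_of Q) (fun_of Q)"
  by (simp add: PiStep_def fun_of_def)
lemma fun_SigStep: "fun_of (SigStep Q) = SigFun (dom_of Q) (fun_of Q)"
  by (simp add: SigStep_def fun_of_def)

lemma sub_PiStep: "Pi_extendible (dom_of Q) (fun_of Q) \<Longrightarrow> sub Q (PiStep Q)"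
  unfolding sub_def dom_PiStep fun_PiStep using PiDom_sup PiFun_const by metis
lemma sub_SigStep: "Sig_extendible (dom_of Q) (fun_of Q) \<Longrightarrow> sub Q (SigStep Q)"
  unfolding sub_def dom_SigStep fun_SigStep using SigDom_sup SigFun_const by metis

lemma PiStep_mono:
  assumes "sub P Q" "Pi_extendible (dom_of P) (fun_of P)" "Pi_extendible (dom_of Q) (fun_of Q)"
  shows "sub (PiStep P) (PiStep Q)"
  unfolding sub_def dom_PiStep fun_PiStep
proof (intro conjI ballI subsetI)
  fix x assume "x \<in> PiDom (dom_of P) (fun_of P)"
  then obtain a where a: "conv_dec (dom_of P) (fun_of P) a" "inf_of a x" unfolding PiDom_def by blast
  then obtain e where e: "inf_of (\<lambda>n. fun_of P (a n)) e" unfolding conv_dec_def by blast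
  have eq: "(\<lambda>n. fun_of P (a n)) = (\<lambda>n. fun_of Q (a n))"
    using a(1) assms(1) unfolding conv_dec_def sub_def by auto
  have a': "conv_dec (dom_of Q) (fun_of Q) a"
    using a(1) assms(1) eq unfolding conv_dec_def sub_def by auto
  have 1: "PiFun (dom_of P) (fun_of P) x = e" using PiFun_val[OF assms(2) a e] by blast
  have 2: "x \<in> PiDom (dom_of Q) (fun_of Q) \<and> PiFun (dom_of Q) (fun_of Q) x = e"
    using PiFun_val[OF assms(3) a' a(2)] e eq by simp
  show "x \<in> PiDom (dom_of Q) (fun_of Q)" using 2 by blast
  show "PiFun (dom_of P) (fun_of P) x = PiFun (dom_of Q) (fun_of Q) x" using 1 2 by simp
qed

lemma SigStep_mono:
  assumes "sub P Q" "Sig_extendible (dom_of P) (fun_of P)" "Sig_extendible (dom_of Q) (fun_of Q)"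
  shows "sub (SigStep P) (SigStep Q)"
  unfolding sub_def dom_SigStep fun_SigStep
proof (intro conjI ballI subsetI)
  fix x assume "x \<in> SigDom (dom_of P) (fun_of P)"
  then obtain a where a: "conv_inc (dom_of P) (fun_of P) a" "sup_of a x" unfolding SigDom_def by blast
  then obtain e where e: "sup_of (\<lambda>n. fun_of P (a n)) e" unfolding conv_inc_def by blast
  have eq: "(\<lambda>n. fun_of P (a n)) = (\<lambda>n. fun_of Q (a n))"
    using a(1) assms(1) unfolding conv_inc_def sub_def by auto
  have a': "conv_inc (dom_of Q) (fun_of Q) a"
    using a(1) assms(1) eq unfolding conv_inc_def sub_def by auto
  have 1: "SigFun (dom_of P) (fun_of P) x = e" using SigFun_val[OF assms(2) a e] by blast
  have 2: "x \<in> SigDom (dom_of Q) (fun_of Q) \<and> SigFun (dom_of Q) (fun_of Q) x = e"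
    using SigFun_val[OF assms(3) a' a(2)] e eq by simp
  show "x \<in> SigDom (dom_of Q) (fun_of Q)" using 2 by blast
  show "SigFun (dom_of P) (fun_of P) x = SigFun (dom_of Q) (fun_of Q) x" using 1 2 by simp
qed

definition ok2 :: "'v::lattice set \<Rightarrow> ('v \<Rightarrow> 'e::ordered_ab_group_add) \<Rightarrow> 'i::wellorder \<Rightarrow> bool" where
  "ok2 L \<phi> \<alpha> \<longleftrightarrow> ok_of (PiH L \<phi> \<alpha>) \<and> ok_of (SigH L \<phi> \<alpha>)"

lemma OKB:
  fixes \<alpha> :: "'i::wellorder"
  shows "ok2 L \<phi> \<alpha> \<Longrightarrow> \<beta> \<le> \<alpha> \<Longrightarrow> ok2 L \<phi> \<beta>"
proof (induction \<alpha> arbitrary: \<beta> rule: less_induct)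
  case (less \<alpha>)
  show ?case
  proof (cases "\<beta> = \<alpha>")
    case True thus ?thesis using less by simp
  next
    case False
    hence lt: "\<beta> < \<alpha>" using less.prems by simp
    consider (z) "is_zero \<alpha>" | (s) \<eta> where "succ_of \<eta> \<alpha>" | (l) "lim_ord \<alpha>" by (rule ord_cases)
    then show ?thesis
    proof cases
      case z thus ?thesis using zero_less lt by blast
    next
      case s
      have "ok2 L \<phi> \<eta>" using less.prems(1) H_succ[OF s, of L \<phi>]
        by (simp add: ok2_def ok_PiStep ok_SigStep)
      thus ?thesis using less.IH[OF succ_less[OF s]] succ_le[OF s lt] by blast
    next
      case l
      thus ?thesis using less.prems(1) H_lim[OF l, of L \<phi>] lt by (simp add: ok2_def)
    qed
  qed
qed

lemma sub_lim_left:
  assumes "\<forall>x\<in>dom_of A. \<exists>\<beta><\<alpha>. x \<in> dom_of (G \<beta>) \<and> fun_of A x = fun_of (G \<beta>) x"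
    and "\<forall>\<beta><\<alpha>. sub (G \<beta>) Q"
  shows "sub A Q"
  using assms unfolding sub_def by (metis subsetD subsetI)

lemma sub_lim_right:
  assumes "\<delta> < \<alpha>" "dom_of A = (\<Union>\<beta>\<in>{\<beta>. \<beta><\<alpha>}. dom_of (G \<beta>))"
    and "\<forall>x\<in>dom_of A. \<exists>\<beta><\<alpha>. x \<in> dom_of (G \<beta>) \<and> fun_of A x = fun_of (G \<beta>) x"
    and "\<forall>\<zeta><\<alpha>. \<forall>x. x \<in> dom_of (G \<delta>) \<and> x \<in> dom_of (G \<zeta>) \<longrightarrow> fun_of (G \<delta>) x = fun_of (G \<zeta>) x"
  shows "sub (G \<delta>) A"
  unfolding sub_def
proof (intro conjI ballI subsetI)
  fix x assume x: "x \<in> dom_of (G \<delta>)"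
  thus "x \<in> dom_of A" using assms(1,2) by auto
  then obtain \<beta> where "\<beta> < \<alpha>" "x \<in> dom_of (G \<beta>)" "fun_of A x = fun_of (G \<beta>) x" using assms(3) by blast
  thus "fun_of (G \<delta>) x = fun_of A x" using assms(4) x by metis
qed

definition M4 :: "'v::lattice set \<Rightarrow> ('v \<Rightarrow> 'e::ordered_ab_group_add) \<Rightarrow> 'i::wellorder \<Rightarrow> 'i \<Rightarrow> bool" where
  "M4 L \<phi> \<delta> \<beta> \<longleftrightarrow> sub (PiH L \<phi> \<delta>) (PiH L \<phi> \<beta>) \<and> sub (SigH L \<phi> \<delta>) (SigH L \<phi> \<beta>) \<and>
     sub (PiH L \<phi> \<delta>) (SigH L \<phi> \<beta>) \<and> sub (SigH L \<phi> \<delta>) (PiH L \<phi> \<beta>)"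

lemma compat_of_chain:
  fixes \<beta> :: "'i::wellorder"
  assumes "\<And>\<zeta> \<delta>. \<zeta> < \<beta> \<Longrightarrow> \<delta> < \<zeta> \<Longrightarrow> sub (G \<delta>) (G \<zeta>)" "\<delta> < \<beta>"
  shows "\<forall>\<zeta><\<beta>. \<forall>x. x \<in> dom_of (G \<delta>) \<and> x \<in> dom_of (G \<zeta>) \<longrightarrow> fun_of (G \<delta>) x = fun_of (G \<zeta>) x"
proof (intro allI impI)
  fix \<zeta> x assume z: "\<zeta> < \<beta>" and x: "x \<in> dom_of (G \<delta>) \<and> x \<in> dom_of (G \<zeta>)"
  consider "\<delta> < \<zeta>" | "\<delta> = \<zeta>" | "\<zeta> < \<delta>" using neq_iff by blast
  thus "fun_of (G \<delta>) x = fun_of (G \<zeta>) x"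
  proof cases
    case 1 thus ?thesis using assms(1)[OF z 1] x unfolding sub_def by auto
  next
    case 2 thus ?thesis by simp
  next
    case 3 thus ?thesis using assms(1)[OF assms(2) 3] x unfolding sub_def by auto
  qed
qed

lemma M:
  fixes \<beta> :: "'i::wellorder"
  shows "ok2 L \<phi> \<beta> \<Longrightarrow> \<delta> < \<beta> \<Longrightarrow> M4 L \<phi> \<delta> \<beta>"
proof (induction \<beta> arbitrary: \<delta> rule: less_induct)
  case (less \<beta>)
  have okb: "\<And>\<gamma>. \<gamma> \<le> \<beta> \<Longrightarrow> ok2 L \<phi> \<gamma>" using OKB less.prems(1) by blast
  consider (z) "is_zero \<beta>" | (s) \<eta> where "succ_of \<eta> \<beta>" | (l) "lim_ord \<beta>" by (rule ord_cases)
  then show ?case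
  proof cases
    case z thus ?thesis using zero_less less.prems(2) by blast
  next
    case s
    have hs: "PiH L \<phi> \<beta> = PiStep (SigH L \<phi> \<eta>)" "SigH L \<phi> \<beta> = SigStep (PiH L \<phi> \<eta>)"
      using H_succ[OF s] by auto
    have ext: "Pi_extendible (dom_of (SigH L \<phi> \<eta>)) (fun_of (SigH L \<phi> \<eta>))"
       "Sig_extendible (dom_of (PiH L \<phi> \<eta>)) (fun_of (PiH L \<phi> \<eta>))"
      using less.prems(1) hs by (auto simp: ok2_def ok_PiStep ok_SigStep)
    have c1: "sub (SigH L \<phi> \<eta>) (PiH L \<phi> \<beta>)" using sub_PiStep[OF ext(1)] hs by simp
    have c2: "sub (PiH L \<phi> \<eta>) (SigH L \<phi> \<beta>)" using sub_SigStep[OF ext(2)] hs by simp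
    have etab: "\<eta> < \<beta>" using succ_less[OF s] .
    have IHe: "\<And>\<delta>. \<delta> < \<eta> \<Longrightarrow> M4 L \<phi> \<delta> \<eta>"
      using less.IH[OF etab] okb etab by simp
    have d: "sub (PiH L \<phi> \<eta>) (PiH L \<phi> \<beta>) \<and> sub (SigH L \<phi> \<eta>) (SigH L \<phi> \<beta>)"
    proof -
      consider (z2) "is_zero \<eta>" | (s2) \<zeta> where "succ_of \<zeta> \<eta>" | (l2) "lim_ord \<eta>" by (rule ord_cases)
      thus ?thesis
      proof cases
        case z2
        hence "PiH L \<phi> \<eta> = SigH L \<phi> \<eta>" using H_zero by metis
        thus ?thesis using c1 c2 by simp
      next
        case s2
        have hs2: "PiH L \<phi> \<eta> = PiStep (SigH L \<phi> \<zeta>)" "SigH L \<phi> \<eta> = SigStep (PiH L \<phi> \<zeta>)"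
          using H_succ[OF s2] by auto
        have ok\<eta>: "ok2 L \<phi> \<eta>" using okb etab by simp
        have ext2: "Pi_extendible (dom_of (SigH L \<phi> \<zeta>)) (fun_of (SigH L \<phi> \<zeta>))"
          "Sig_extendible (dom_of (PiH L \<phi> \<zeta>)) (fun_of (PiH L \<phi> \<zeta>))"
          using ok\<eta> hs2 by (auto simp: ok2_def ok_PiStep ok_SigStep)
        have m: "M4 L \<phi> \<zeta> \<eta>" using IHe succ_less[OF s2] by blast
        show ?thesis using PiStep_mono[OF _ ext2(1) ext(1)] SigStep_mono[OF _ ext2(2) ext(2)] m hs hs2
          unfolding M4_def by simp
      next
        case l2
        note hl = H_lim[OF l2, of L \<phi>]
        have a1: "\<forall>\<zeta><\<eta>. sub (PiH L \<phi> \<zeta>) (PiH L \<phi> \<beta>)"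
          using IHe c1 sub_trans unfolding M4_def by metis
        have a2: "\<forall>\<zeta><\<eta>. sub (SigH L \<phi> \<zeta>) (SigH L \<phi> \<beta>)"
          using IHe c2 sub_trans unfolding M4_def by metis
        have 1: "sub (PiH L \<phi> \<eta>) (PiH L \<phi> \<beta>)"
          using sub_lim_left[of "PiH L \<phi> \<eta>" \<eta> "PiH L \<phi>", OF _ a1] hl by blast
        have 2: "sub (SigH L \<phi> \<eta>) (SigH L \<phi> \<beta>)"
          using sub_lim_left[of "SigH L \<phi> \<eta>" \<eta> "SigH L \<phi>", OF _ a2] hl by blast
        show ?thesis using 1 2 by simp
      qed
    qed
    have "\<delta> \<le> \<eta>" using succ_le[OF s less.prems(2)] .
    hence "\<delta> = \<eta> \<or> \<delta> < \<eta>" by auto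
    thus ?thesis
    proof
      assume "\<delta> = \<eta>" thus ?thesis using c1 c2 d unfolding M4_def by simp
    next
      assume "\<delta> < \<eta>"
      thus ?thesis using IHe[of \<delta>] c1 c2 d sub_trans unfolding M4_def by metis
    qed
  next
    case l
    note hl = H_lim[OF l, of L \<phi>]
    have IH': "\<And>\<zeta> \<delta>. \<zeta> < \<beta> \<Longrightarrow> \<delta> < \<zeta> \<Longrightarrow> M4 L \<phi> \<delta> \<zeta>"
      using less.IH okb by simp
    have pp: "sub (PiH L \<phi> \<delta>') (PiH L \<phi> \<beta>)" if "\<delta>' < \<beta>" for \<delta>'
    proof (rule sub_lim_right[OF that])
      show "\<forall>\<zeta><\<beta>. \<forall>x. x \<in> dom_of (PiH L \<phi> \<delta>') \<and> x \<in> dom_of (PiH L \<phi> \<zeta>) \<longrightarrow>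
         fun_of (PiH L \<phi> \<delta>') x = fun_of (PiH L \<phi> \<zeta>) x"
        by (rule compat_of_chain[OF _ that]) (use IH' in \<open>auto simp: M4_def\<close>)
    qed (use hl in auto)
    have ss: "sub (SigH L \<phi> \<delta>') (SigH L \<phi> \<beta>)" if "\<delta>' < \<beta>" for \<delta>'
    proof (rule sub_lim_right[OF that])
      show "\<forall>\<zeta><\<beta>. \<forall>x. x \<in> dom_of (SigH L \<phi> \<delta>') \<and> x \<in> dom_of (SigH L \<phi> \<zeta>) \<longrightarrow>
         fun_of (SigH L \<phi> \<delta>') x = fun_of (SigH L \<phi> \<zeta>) x"
        by (rule compat_of_chain[OF _ that]) (use IH' in \<open>auto simp: M4_def\<close>)
    qed (use hl in auto)
    obtain s where s: "succ_of \<delta> s" "s < \<beta>" using lim_succ[OF l less.prems(2)] by blast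
    have "M4 L \<phi> \<delta> s" using IH'[OF s(2) succ_less[OF s(1)]] .
    thus ?thesis using pp ss s(2) less.prems(2) sub_trans unfolding M4_def by metis
  qed
qed

lemma eqv_dom: "eqv A B \<Longrightarrow> dom_of A = dom_of B" unfolding eqv_def sub_def by auto
lemma eqv_fun: "eqv A B \<Longrightarrow> x \<in> dom_of B \<Longrightarrow> fun_of A x = fun_of B x" unfolding eqv_def sub_def by auto
lemma eqv_transfer: "dom_of A = dom_of B \<Longrightarrow> fun_of A = fun_of B \<Longrightarrow> eqv B Q \<Longrightarrow> eqv A Q"
  unfolding eqv_def sub_def by auto
lemma eqv_sym: "eqv A B \<Longrightarrow> eqv B A" unfolding eqv_def by auto
lemma eqv_trans: "eqv A B \<Longrightarrow> eqv B C \<Longrightarrow> eqv A C" unfolding eqv_def using sub_trans by blast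

lemma LimEq:
  fixes \<beta> :: "'i::wellorder"
  assumes l: "lim_ord \<beta>" and ok: "ok2 L \<phi> \<beta>"
  shows "eqv (PiH L \<phi> \<beta>) (SigH L \<phi> \<beta>)"
proof -
  note hl = H_lim[OF l, of L \<phi>]
  have a1: "\<forall>\<zeta><\<beta>. sub (PiH L \<phi> \<zeta>) (SigH L \<phi> \<beta>)" using M[OF ok] unfolding M4_def by blast
  have a2: "\<forall>\<zeta><\<beta>. sub (SigH L \<phi> \<zeta>) (PiH L \<phi> \<beta>)" using M[OF ok] unfolding M4_def by blast
  show ?thesis unfolding eqv_def
    using sub_lim_left[of "PiH L \<phi> \<beta>" \<beta> "PiH L \<phi>", OF _ a1]
          sub_lim_left[of "SigH L \<phi> \<beta>" \<beta> "SigH L \<phi>", OF _ a2] hl by blast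
qed

lemma val_lim:
  fixes \<alpha> :: "'i::wellorder"
  assumes d: "dom_of A = (\<Union>\<beta>\<in>{\<beta>. \<beta><\<alpha>}. dom_of (G \<beta>))"
    and v: "\<forall>\<zeta><\<alpha>. valuation_on (dom_of (G \<zeta>)) (fun_of (G \<zeta>))"
    and s: "\<forall>\<delta><\<alpha>. sub (G \<delta>) A"
    and c: "\<forall>\<zeta>1<\<alpha>. \<forall>\<zeta>2<\<alpha>. \<zeta>1 \<le> \<zeta>2 \<longrightarrow> sub (G \<zeta>1) (G \<zeta>2)"
  shows "valuation_on (dom_of A) (fun_of A)"
proof -
  have key: "\<exists>\<zeta><\<alpha>. a \<in> dom_of (G \<zeta>) \<and> b \<in> dom_of (G \<zeta>)" if ab0: "a \<in> dom_of A" "b \<in> dom_of A" for a b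
  proof -
    obtain z1 where z1: "z1 < \<alpha>" "a \<in> dom_of (G z1)" using ab0(1) d by blast
    obtain z2 where z2: "z2 < \<alpha>" "b \<in> dom_of (G z2)" using ab0(2) d by blast
    show ?thesis
    proof (cases "z1 \<le> z2")
      case True
      hence "sub (G z1) (G z2)" using c z1(1) z2(1) by blast
      hence "a \<in> dom_of (G z2)" using z1(2) unfolding sub_def by blast
      thus ?thesis using z2 by blast
    next
      case False
      hence "sub (G z2) (G z1)" using c z1(1) z2(1) by simp
      hence "b \<in> dom_of (G z1)" using z2(2) unfolding sub_def by blast
      thus ?thesis using z1 by blast
    qed
  qed
  have loc: "inf a b \<in> dom_of A \<and> sup a b \<in> dom_of A \<and> (a \<le> b \<longrightarrow> fun_of A a \<le> fun_of A b) \<and>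
     fun_of A (inf a b) + fun_of A (sup a b) = fun_of A a + fun_of A b"
    if ab: "a \<in> dom_of A" "b \<in> dom_of A" for a b
  proof -
    obtain z where z: "z < \<alpha>" "a \<in> dom_of (G z)" "b \<in> dom_of (G z)" using key[OF ab] by blast
    have vz: "valuation_on (dom_of (G z)) (fun_of (G z))" using v z(1) by blast
    have sz: "sub (G z) A" using s z(1) by blast
    have f: "\<And>y. y \<in> dom_of (G z) \<Longrightarrow> fun_of A y = fun_of (G z) y \<and> y \<in> dom_of A"
      using sz unfolding sub_def by auto
    have cl: "inf a b \<in> dom_of (G z)" "sup a b \<in> dom_of (G z)"
      using vz z(2,3) unfolding valuation_on_def sublattice_def by auto
    have mono: "a \<le> b \<Longrightarrow> fun_of (G z) a \<le> fun_of (G z) b"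
      using vz z(2,3) unfolding valuation_on_def by auto
    have modu: "fun_of (G z) (inf a b) + fun_of (G z) (sup a b) = fun_of (G z) a + fun_of (G z) b"
      using vz z(2,3) unfolding valuation_on_def by auto
    show ?thesis using f[OF z(2)] f[OF z(3)] f[OF cl(1)] f[OF cl(2)] mono modu by simp
  qed
  show ?thesis unfolding valuation_on_def sublattice_def using loc by blast
qed

lemma V:
  fixes \<beta> :: "'i::wellorder"
  assumes vL: "valuation_on L \<phi>"
  shows "ok2 L \<phi> \<beta> \<Longrightarrow> valuation_on (dom_of (PiH L \<phi> \<beta>)) (fun_of (PiH L \<phi> \<beta>)) \<and>
                          valuation_on (dom_of (SigH L \<phi> \<beta>)) (fun_of (SigH L \<phi> \<beta>))"
proof (induction \<beta> rule: less_induct)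
  case (less \<beta>)
  have okb: "\<And>\<gamma>. \<gamma> \<le> \<beta> \<Longrightarrow> ok2 L \<phi> \<gamma>" using OKB less.prems(1) by blast
  consider (z) "is_zero \<beta>" | (s) \<eta> where "succ_of \<eta> \<beta>" | (l) "lim_ord \<beta>" by (rule ord_cases)
  then show ?case
  proof cases
    case z thus ?thesis using H_zero[OF z, of L \<phi>] vL by (simp add: dom_of_def fun_of_def)
  next
    case s
    have hs: "PiH L \<phi> \<beta> = PiStep (SigH L \<phi> \<eta>)" "SigH L \<phi> \<beta> = SigStep (PiH L \<phi> \<eta>)"
      using H_succ[OF s] by auto
    have ext: "Pi_extendible (dom_of (SigH L \<phi> \<eta>)) (fun_of (SigH L \<phi> \<eta>))"
       "Sig_extendible (dom_of (PiH L \<phi> \<eta>)) (fun_of (PiH L \<phi> \<eta>))"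
      using less.prems(1) hs by (auto simp: ok2_def ok_PiStep ok_SigStep)
    show ?thesis using PiFun_prop[OF ext(1)] SigFun_prop[OF ext(2)] hs
      by (simp add: dom_PiStep fun_PiStep dom_SigStep fun_SigStep Pi_ext_prop_def Sig_ext_prop_def)
  next
    case l
    note hl = H_lim[OF l, of L \<phi>]
    have vs: "\<forall>\<zeta><\<beta>. valuation_on (dom_of (PiH L \<phi> \<zeta>)) (fun_of (PiH L \<phi> \<zeta>)) \<and>
                      valuation_on (dom_of (SigH L \<phi> \<zeta>)) (fun_of (SigH L \<phi> \<zeta>))"
      using less.IH okb by simp
    have m: "\<forall>\<delta><\<beta>. M4 L \<phi> \<delta> \<beta>" using M[OF less.prems(1)] by blast
    have ch0: "M4 L \<phi> z1 z2" if "z1 < \<beta>" "z2 < \<beta>" "z1 < z2" for z1 z2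
      using M[of L \<phi> z2 z1] okb that by simp
    have ch1: "\<forall>\<zeta>1<\<beta>. \<forall>\<zeta>2<\<beta>. \<zeta>1 \<le> \<zeta>2 \<longrightarrow> sub (PiH L \<phi> \<zeta>1) (PiH L \<phi> \<zeta>2)"
    proof (intro allI impI)
      fix z1 z2 assume "z1 < \<beta>" "z2 < \<beta>" "z1 \<le> z2"
      thus "sub (PiH L \<phi> z1) (PiH L \<phi> z2)" using ch0[of z1 z2] sub_refl
        unfolding M4_def by (cases "z1 = z2") (simp add: sub_refl, auto)
    qed
    have ch2: "\<forall>\<zeta>1<\<beta>. \<forall>\<zeta>2<\<beta>. \<zeta>1 \<le> \<zeta>2 \<longrightarrow> sub (SigH L \<phi> \<zeta>1) (SigH L \<phi> \<zeta>2)"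
    proof (intro allI impI)
      fix z1 z2 assume "z1 < \<beta>" "z2 < \<beta>" "z1 \<le> z2"
      thus "sub (SigH L \<phi> z1) (SigH L \<phi> z2)" using ch0[of z1 z2] sub_refl
        unfolding M4_def by (cases "z1 = z2") (simp add: sub_refl, auto)
    qed
    have m1: "\<forall>\<delta><\<beta>. sub (PiH L \<phi> \<delta>) (PiH L \<phi> \<beta>)" using m unfolding M4_def by blast
    have m2: "\<forall>\<delta><\<beta>. sub (SigH L \<phi> \<delta>) (SigH L \<phi> \<beta>)" using m unfolding M4_def by blast
    have vs1: "\<forall>\<zeta><\<beta>. valuation_on (dom_of (PiH L \<phi> \<zeta>)) (fun_of (PiH L \<phi> \<zeta>))" using vs by blast
    have vs2: "\<forall>\<zeta><\<beta>. valuation_on (dom_of (SigH L \<phi> \<zeta>)) (fun_of (SigH L \<phi> \<zeta>))" using vs by blast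
    show ?thesis
      using val_lim[where A="PiH L \<phi> \<beta>" and \<alpha>=\<beta> and G="PiH L \<phi>", OF _ vs1 m1 ch1]
        val_lim[where A="SigH L \<phi> \<beta>" and \<alpha>=\<beta> and G="SigH L \<phi>", OF _ vs2 m2 ch2] hl by blast
  qed
qed

lemma eqv_PiStep_closed:
  assumes "Pi_extendible (dom_of Q) (fun_of Q)" "PiDom (dom_of Q) (fun_of Q) = dom_of Q"
    "\<forall>x\<in>dom_of Q. PiFun (dom_of Q) (fun_of Q) x = fun_of Q x"
  shows "eqv (PiStep Q) Q"
  using assms unfolding eqv_def sub_def dom_PiStep fun_PiStep by auto

lemma eqv_SigStep_closed:
  assumes "Sig_extendible (dom_of Q) (fun_of Q)" "SigDom (dom_of Q) (fun_of Q) = dom_of Q"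
    "\<forall>x\<in>dom_of Q. SigFun (dom_of Q) (fun_of Q) x = fun_of Q x"
  shows "eqv (SigStep Q) Q"
  using assms unfolding eqv_def sub_def dom_SigStep fun_SigStep by auto

lemma collapse_prop:
  fixes \<alpha> :: "'i::wellorder"
  assumes col: "collapsed_at L \<phi> \<alpha> Q" and ab: "\<alpha> < \<beta>0"
  shows "\<alpha> < \<beta> \<Longrightarrow> ok2 L \<phi> \<beta> \<and> eqv (PiH L \<phi> \<beta>) Q \<and> eqv (SigH L \<phi> \<beta>) Q"
proof -
  have okP1: "ok_of (PiStep (SigH L \<phi> \<alpha>))" and okS1: "ok_of (SigStep (PiH L \<phi> \<alpha>))"
    and Qc: "Q = PiH L \<phi> \<alpha> \<or> Q = SigH L \<phi> \<alpha>"
    and ePi: "Pi_extendible (dom_of Q) (fun_of Q)" and eSig: "Sig_extendible (dom_of Q) (fun_of Q)"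
    using col unfolding collapsed_at_def by blast+
  have eqPi: "eqv (PiStep Q) Q" using col eqv_PiStep_closed unfolding collapsed_at_def by blast
  have eqSig: "eqv (SigStep Q) Q" using col eqv_SigStep_closed unfolding collapsed_at_def by blast
  have ok2a: "ok2 L \<phi> \<alpha>" using okP1 okS1 by (simp add: ok2_def ok_PiStep ok_SigStep)
  have extS: "Pi_extendible (dom_of (SigH L \<phi> \<alpha>)) (fun_of (SigH L \<phi> \<alpha>))" using okP1 by (simp add: ok_PiStep)
  have extP: "Sig_extendible (dom_of (PiH L \<phi> \<alpha>)) (fun_of (PiH L \<phi> \<alpha>))" using okS1 by (simp add: ok_SigStep)
  obtain s where s: "succ_of \<alpha> s" using exists_succ[OF ab] by blast
  have hs: "PiH L \<phi> s = PiStep (SigH L \<phi> \<alpha>)" "SigH L \<phi> s = SigStep (PiH L \<phi> \<alpha>)"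
    using H_succ[OF s] by auto
  have ok2s: "ok2 L \<phi> s" using okP1 okS1 hs by (simp add: ok2_def)
  have m: "M4 L \<phi> \<alpha> s" using M[OF ok2s succ_less[OF s]] .
  have base: "ok2 L \<phi> s \<and> eqv (PiH L \<phi> s) Q \<and> eqv (SigH L \<phi> s) Q"
  proof -
    { assume q: "Q = PiH L \<phi> \<alpha>"
      have e1: "eqv (SigH L \<phi> s) Q" using eqSig hs q by simp
      have "sub (SigH L \<phi> \<alpha>) Q" using m e1 sub_trans unfolding M4_def eqv_def by blast
      hence "sub (PiH L \<phi> s) (PiStep Q)" using PiStep_mono[OF _ extS ePi] hs by simp
      hence "sub (PiH L \<phi> s) Q" using eqPi sub_trans unfolding eqv_def by blast
      moreover have "sub Q (PiH L \<phi> s)" using m q unfolding M4_def by simp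
      ultimately have ?thesis using e1 ok2s unfolding eqv_def by blast }
    moreover
    { assume q: "Q = SigH L \<phi> \<alpha>"
      have e1: "eqv (PiH L \<phi> s) Q" using eqPi hs q by simp
      have "sub (PiH L \<phi> \<alpha>) Q" using m e1 sub_trans unfolding M4_def eqv_def by blast
      hence "sub (SigH L \<phi> s) (SigStep Q)" using SigStep_mono[OF _ extP eSig] hs by simp
      hence "sub (SigH L \<phi> s) Q" using eqSig sub_trans unfolding eqv_def by blast
      moreover have "sub Q (SigH L \<phi> s)" using m q unfolding M4_def by simp
      ultimately have ?thesis using e1 ok2s unfolding eqv_def by blast }
    ultimately show ?thesis using Qc by blast
  qed
  have below: "sub (PiH L \<phi> \<delta>) Q \<and> sub (SigH L \<phi> \<delta>) Q" if "\<delta> \<le> \<alpha>" for \<delta>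
  proof -
    have "\<delta> < s" using that succ_less[OF s] by simp
    hence "M4 L \<phi> \<delta> s" using M[OF ok2s] by blast
    thus ?thesis using base sub_trans unfolding M4_def eqv_def by blast
  qed
  show "\<alpha> < \<beta> \<Longrightarrow> ok2 L \<phi> \<beta> \<and> eqv (PiH L \<phi> \<beta>) Q \<and> eqv (SigH L \<phi> \<beta>) Q"
  proof (induction \<beta> rule: less_induct)
    case (less \<beta>)
    consider (z) "is_zero \<beta>" | (sc) \<eta> where "succ_of \<eta> \<beta>" | (l) "lim_ord \<beta>" by (rule ord_cases)
    then show ?case
    proof cases
      case z thus ?thesis using zero_less less.prems by blast
    next
      case sc
      have "\<alpha> \<le> \<eta>" using succ_le[OF sc less.prems] .
      hence "\<alpha> = \<eta> \<or> \<alpha> < \<eta>" by auto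
      thus ?thesis
      proof
        assume "\<alpha> = \<eta>"
        hence "\<beta> = s" using succ_unique2 sc s by blast
        thus ?thesis using base by simp
      next
        assume a: "\<alpha> < \<eta>"
        have IH: "ok2 L \<phi> \<eta> \<and> eqv (PiH L \<phi> \<eta>) Q \<and> eqv (SigH L \<phi> \<eta>) Q"
          using less.IH[OF succ_less[OF sc] a] .
        have hs2: "PiH L \<phi> \<beta> = PiStep (SigH L \<phi> \<eta>)" "SigH L \<phi> \<beta> = SigStep (PiH L \<phi> \<eta>)"
          using H_succ[OF sc] by auto
        have c1: "dom_of (PiStep (SigH L \<phi> \<eta>)) = dom_of (PiStep Q) \<and> fun_of (PiStep (SigH L \<phi> \<eta>)) = fun_of (PiStep Q) \<and>
           Pi_extendible (dom_of (SigH L \<phi> \<eta>)) (fun_of (SigH L \<phi> \<eta>)) = Pi_extendible (dom_of Q) (fun_of Q)"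
          by (rule PiStep_cong) (use eqv_dom[of "SigH L \<phi> \<eta>" Q] eqv_fun[of "SigH L \<phi> \<eta>" Q] IH in blast)+
        have c2: "dom_of (SigStep (PiH L \<phi> \<eta>)) = dom_of (SigStep Q) \<and> fun_of (SigStep (PiH L \<phi> \<eta>)) = fun_of (SigStep Q) \<and>
           Sig_extendible (dom_of (PiH L \<phi> \<eta>)) (fun_of (PiH L \<phi> \<eta>)) = Sig_extendible (dom_of Q) (fun_of Q)"
          by (rule SigStep_cong) (use eqv_dom[of "PiH L \<phi> \<eta>" Q] eqv_fun[of "PiH L \<phi> \<eta>" Q] IH in blast)+
        have "ok2 L \<phi> \<beta>" using IH c1 c2 ePi eSig hs2 by (simp add: ok2_def ok_PiStep ok_SigStep)
        moreover have "eqv (PiH L \<phi> \<beta>) Q" using eqv_transfer[OF _ _ eqPi] c1 hs2 by simp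
        moreover have "eqv (SigH L \<phi> \<beta>) Q" using eqv_transfer[OF _ _ eqSig] c2 hs2 by simp
        ultimately show ?thesis by blast
      qed
    next
      case l
      note hl = H_lim[OF l, of L \<phi>]
      have allb: "ok2 L \<phi> \<delta> \<and> sub (PiH L \<phi> \<delta>) Q \<and> sub (SigH L \<phi> \<delta>) Q" if "\<delta> < \<beta>" for \<delta>
      proof (cases "\<delta> \<le> \<alpha>")
        case True thus ?thesis using below OKB[OF ok2a] by blast
      next
        case False
        hence "\<alpha> < \<delta>" by simp
        thus ?thesis using less.IH[OF that] unfolding eqv_def by blast
      qed
      have ok: "ok2 L \<phi> \<beta>" using hl allb by (simp add: ok2_def)
      have a1: "\<forall>\<zeta><\<beta>. sub (PiH L \<phi> \<zeta>) Q" using allb by blast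
      have a2: "\<forall>\<zeta><\<beta>. sub (SigH L \<phi> \<zeta>) Q" using allb by blast
      have u1: "sub (PiH L \<phi> \<beta>) Q" using sub_lim_left[of "PiH L \<phi> \<beta>" \<beta> "PiH L \<phi>", OF _ a1] hl by blast
      have u2: "sub (SigH L \<phi> \<beta>) Q" using sub_lim_left[of "SigH L \<phi> \<beta>" \<beta> "SigH L \<phi>", OF _ a2] hl by blast
      obtain s' where s': "succ_of \<alpha> s'" "s' < \<beta>" using lim_succ[OF l less.prems] by blast
      have "s' = s" using succ_unique2 s s'(1) by blast
      hence sb: "s < \<beta>" using s' by simp
      have "M4 L \<phi> s \<beta>" using M[OF ok sb] .
      hence "sub Q (PiH L \<phi> \<beta>) \<and> sub Q (SigH L \<phi> \<beta>)" using base sub_trans unfolding M4_def eqv_def by blast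
      thus ?thesis using ok u1 u2 unfolding eqv_def by blast
    qed
  qed
qed

lemma aleph_lim:
  fixes w :: "'i::wellorder"
  assumes "is_aleph1 w"
  shows "lim_ord w"
proof -
  have unc: "uncountable {j. j < w}" and cnt: "\<forall>j<w. countable {k. k < j}"
    using assms unfolding is_aleph1_def by auto
  have nz: "\<not> is_zero w"
  proof
    assume "is_zero w"
    hence "{j. j < w} = {}" unfolding is_zero_def by auto
    thus False using unc by simp
  qed
  have ns: "\<not> (\<exists>\<beta>. succ_of \<beta> w)"
  proof
    assume "\<exists>\<beta>. succ_of \<beta> w"
    then obtain \<beta> where b: "succ_of \<beta> w" by blast
    have "{j. j < w} \<subseteq> insert \<beta> {k. k < \<beta>}"
    proof
      fix j assume "j \<in> {j. j < w}"
      hence jw: "j < w" by simp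
      have "\<not> \<beta> < j" using b jw unfolding succ_of_def by blast
      hence "j = \<beta> \<or> j < \<beta>" by (metis not_less_iff_gr_or_eq)
      thus "j \<in> insert \<beta> {k. k < \<beta>}" by blast
    qed
    moreover have "countable (insert \<beta> {k. k < \<beta>})" using cnt succ_less[OF b] by simp
    ultimately show False using unc countable_subset by blast
  qed
  show ?thesis using nz ns unfolding lim_ord_def by blast
qed

lemma aleph_bound:
  fixes w :: "'i::wellorder" and \<delta> :: "nat \<Rightarrow> 'i"
  assumes "is_aleph1 w" "\<forall>n. \<delta> n < w"
  shows "\<exists>j<w. \<forall>n. \<delta> n < j"
proof -
  have unc: "uncountable {j. j < w}" and cnt: "\<forall>j<w. countable {k. k < j}"
    using assms(1) unfolding is_aleph1_def by auto
  have c: "countable (\<Union>n. insert (\<delta> n) {k. k < \<delta> n})"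
  proof -
    have "\<And>n. countable (insert (\<delta> n) {k. k < \<delta> n})" using cnt assms(2) by simp
    thus ?thesis by (intro countable_UN) auto
  qed
  have "\<not> {j. j < w} \<subseteq> (\<Union>n. insert (\<delta> n) {k. k < \<delta> n})"
    using unc c countable_subset by blast
  then obtain j where "j < w" "j \<notin> (\<Union>n. insert (\<delta> n) {k. k < \<delta> n})" by blast
  hence "\<forall>n. \<delta> n < j" by (simp add: not_less le_less) (metis not_less_iff_gr_or_eq)
  thus ?thesis using \<open>j < w\<close> by blast
qed

lemma col_ok2: "collapsed_at L \<phi> \<alpha> Q \<Longrightarrow> ok2 L \<phi> \<alpha>"
  unfolding collapsed_at_def ok2_def by (simp add: ok_PiStep ok_SigStep)

lemma Dcol:
  fixes w :: "'i::wellorder"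
  assumes al: "is_aleph1 w" and vL: "valuation_on L \<phi>" and okw: "ok_of (PiH L \<phi> w)"
  shows "collapsed_at L \<phi> w (PiH L \<phi> w)"
proof -
  have l: "lim_ord w" using aleph_lim[OF al] .
  note hl = H_lim[OF l, of L \<phi>]
  have okP: "\<forall>\<beta><w. ok_of (PiH L \<phi> \<beta>)" using okw hl by simp
  have okS: "ok_of (SigH L \<phi> w)"
  proof -
    have "ok_of (SigH L \<phi> \<delta>)" if dw: "\<delta> < w" for \<delta>
    proof -
      obtain s where s: "succ_of \<delta> s" "s < w" using lim_succ[OF l dw] by blast
      have "ok_of (PiH L \<phi> s)" using okP s(2) by blast
      hence "ok_of (PiStep (SigH L \<phi> \<delta>))" using H_succ[OF s(1), of L \<phi>] by simp
      thus ?thesis by (simp add: ok_PiStep)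
    qed
    thus ?thesis using hl by simp
  qed
  have ok2w: "ok2 L \<phi> w" using okw okS by (simp add: ok2_def)
  have okSall: "\<forall>\<beta><w. ok_of (SigH L \<phi> \<beta>)" using okS hl by simp
  have mw: "\<And>\<delta>. \<delta> < w \<Longrightarrow> M4 L \<phi> \<delta> w" using M[OF ok2w] by blast
  let ?D = "dom_of (PiH L \<phi> w)" and ?f = "fun_of (PiH L \<phi> w)"
  have choose: "\<exists>\<delta>. (\<forall>n. \<delta> n < w \<and> a n \<in> dom_of (PiH L \<phi> (\<delta> n)))" if "\<forall>n. a n \<in> ?D" for a
  proof -
    have "\<forall>n. \<exists>d. d < w \<and> a n \<in> dom_of (PiH L \<phi> d)" using that hl by auto
    thus ?thesis by metis
  qed
  have clPi: "x \<in> ?D \<and> ?f x = e" if a: "conv_dec ?D ?f a" "inf_of a x" "inf_of (\<lambda>n. ?f (a n)) e" for a x e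
  proof -
    have an: "\<forall>n. a n \<in> ?D" using a(1) unfolding conv_dec_def by blast
    obtain \<delta> where d: "\<forall>n. \<delta> n < w \<and> a n \<in> dom_of (PiH L \<phi> (\<delta> n))" using choose[OF an] by blast
    obtain j where j: "j < w" "\<forall>n. \<delta> n < j" using aleph_bound[OF al] d by blast
    have ok2j: "ok2 L \<phi> j" using OKB[OF ok2w] j(1) by simp
    have s1: "sub (PiH L \<phi> (\<delta> n)) (SigH L \<phi> j)" for n using M[OF ok2j j(2)[rule_format, of n]] unfolding M4_def by blast
    have s2: "sub (PiH L \<phi> (\<delta> n)) (PiH L \<phi> w)" for n using mw[of "\<delta> n"] d unfolding M4_def by blast
    have inS: "a n \<in> dom_of (SigH L \<phi> j) \<and> fun_of (SigH L \<phi> j) (a n) = ?f (a n)" for n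
      using s1[of n] s2[of n] d unfolding sub_def by auto
    have eqf: "(\<lambda>n. fun_of (SigH L \<phi> j) (a n)) = (\<lambda>n. ?f (a n))" using inS by auto
    have cd: "conv_dec (dom_of (SigH L \<phi> j)) (fun_of (SigH L \<phi> j)) a"
      using a(1) inS eqf unfolding conv_dec_def by auto
    obtain s where s: "succ_of j s" "s < w" using lim_succ[OF l j(1)] by blast
    have hs: "PiH L \<phi> s = PiStep (SigH L \<phi> j)" using H_succ[OF s(1)] by auto
    have ext: "Pi_extendible (dom_of (SigH L \<phi> j)) (fun_of (SigH L \<phi> j))"
    proof -
      have "ok_of (PiH L \<phi> s)" using okP s(2) by blast
      thus ?thesis using hs by (simp add: ok_PiStep)
    qed
    have r: "x \<in> dom_of (PiH L \<phi> s) \<and> fun_of (PiH L \<phi> s) x = e"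
      using PiFun_val[OF ext cd a(2)] a(3) eqf hs by (simp add: dom_PiStep fun_PiStep)
    have "sub (PiH L \<phi> s) (PiH L \<phi> w)" using mw[OF s(2)] unfolding M4_def by blast
    thus ?thesis using r unfolding sub_def by auto
  qed
  have clSig: "x \<in> ?D \<and> ?f x = e" if a: "conv_inc ?D ?f a" "sup_of a x" "sup_of (\<lambda>n. ?f (a n)) e" for a x e
  proof -
    have an: "\<forall>n. a n \<in> ?D" using a(1) unfolding conv_inc_def by blast
    obtain \<delta> where d: "\<forall>n. \<delta> n < w \<and> a n \<in> dom_of (PiH L \<phi> (\<delta> n))" using choose[OF an] by blast
    obtain j where j: "j < w" "\<forall>n. \<delta> n < j" using aleph_bound[OF al] d by blast
    have ok2j: "ok2 L \<phi> j" using OKB[OF ok2w] j(1) by simp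
    have s1: "sub (PiH L \<phi> (\<delta> n)) (PiH L \<phi> j)" for n using M[OF ok2j j(2)[rule_format, of n]] unfolding M4_def by blast
    have s2: "sub (PiH L \<phi> (\<delta> n)) (PiH L \<phi> w)" for n using mw[of "\<delta> n"] d unfolding M4_def by blast
    have inP: "a n \<in> dom_of (PiH L \<phi> j) \<and> fun_of (PiH L \<phi> j) (a n) = ?f (a n)" for n
      using s1[of n] s2[of n] d unfolding sub_def by auto
    have eqf: "(\<lambda>n. fun_of (PiH L \<phi> j) (a n)) = (\<lambda>n. ?f (a n))" using inP by auto
    have cd: "conv_inc (dom_of (PiH L \<phi> j)) (fun_of (PiH L \<phi> j)) a"
      using a(1) inP eqf unfolding conv_inc_def by auto
    obtain s where s: "succ_of j s" "s < w" using lim_succ[OF l j(1)] by blast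
    have hs: "SigH L \<phi> s = SigStep (PiH L \<phi> j)" using H_succ[OF s(1)] by auto
    have ext: "Sig_extendible (dom_of (PiH L \<phi> j)) (fun_of (PiH L \<phi> j))"
    proof -
      have "ok_of (SigH L \<phi> s)" using okSall s(2) by blast
      thus ?thesis using hs by (simp add: ok_SigStep)
    qed
    have r: "x \<in> dom_of (SigH L \<phi> s) \<and> fun_of (SigH L \<phi> s) x = e"
      using SigFun_val[OF ext cd a(2)] a(3) eqf hs by (simp add: dom_SigStep fun_SigStep)
    have "sub (SigH L \<phi> s) (PiH L \<phi> w)" using mw[OF s(2)] unfolding M4_def by blast
    thus ?thesis using r unfolding sub_def by auto
  qed
  have pd: "PiDom ?D ?f = ?D"
  proof
    show "PiDom ?D ?f \<subseteq> ?D"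
    proof
      fix x assume "x \<in> PiDom ?D ?f"
      then obtain a where a: "conv_dec ?D ?f a" "inf_of a x" unfolding PiDom_def by blast
      then obtain e where "inf_of (\<lambda>n. ?f (a n)) e" unfolding conv_dec_def by blast
      thus "x \<in> ?D" using clPi a by blast
    qed
  qed (rule PiDom_sup)
  have sd: "SigDom ?D ?f = ?D"
  proof
    show "SigDom ?D ?f \<subseteq> ?D"
    proof
      fix x assume "x \<in> SigDom ?D ?f"
      then obtain a where a: "conv_inc ?D ?f a" "sup_of a x" unfolding SigDom_def by blast
      then obtain e where "sup_of (\<lambda>n. ?f (a n)) e" unfolding conv_inc_def by blast
      thus "x \<in> ?D" using clSig a by blast
    qed
  qed (rule SigDom_sup)
  have valw: "valuation_on ?D ?f" using V[OF vL ok2w] by blast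
  have ePi: "Pi_extendible ?D ?f"
  proof -
    have "Pi_ext_prop ?D ?f ?f" unfolding Pi_ext_prop_def
    proof (intro conjI allI impI)
      show "valuation_on (PiDom ?D ?f) ?f" using pd valw by simp
      fix a x e assume "conv_dec ?D ?f a" "inf_of a x" "inf_of (\<lambda>n. ?f (a n)) e"
      thus "?f x = e" using clPi by blast
    qed
    thus ?thesis unfolding Pi_extendible_def by blast
  qed
  have eSig: "Sig_extendible ?D ?f"
  proof -
    have "Sig_ext_prop ?D ?f ?f" unfolding Sig_ext_prop_def
    proof (intro conjI allI impI)
      show "valuation_on (SigDom ?D ?f) ?f" using sd valw by simp
      fix a x e assume "conv_inc ?D ?f a" "sup_of a x" "sup_of (\<lambda>n. ?f (a n)) e"
      thus "?f x = e" using clSig by blast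
    qed
    thus ?thesis unfolding Sig_extendible_def by blast
  qed
  have eq: "eqv (PiH L \<phi> w) (SigH L \<phi> w)" using LimEq[OF l ok2w] .
  have "Pi_extendible (dom_of (SigH L \<phi> w)) (fun_of (SigH L \<phi> w)) = Pi_extendible ?D ?f"
    by (rule PiStep_cong[THEN conjunct2, THEN conjunct2])
       (use eqv_dom[OF eq] eqv_fun[OF eqv_sym[OF eq]] in auto)
  hence ePiS: "Pi_extendible (dom_of (SigH L \<phi> w)) (fun_of (SigH L \<phi> w))" using ePi by simp
  have o1: "ok_of (PiStep (SigH L \<phi> w))" using okS ePiS by (simp add: ok_PiStep)
  have o2: "ok_of (SigStep (PiH L \<phi> w))" using okw eSig by (simp add: ok_SigStep)
  have f1: "\<forall>x\<in>?D. PiFun ?D ?f x = ?f x" using PiFun_const[OF ePi] by blast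
  have f2: "\<forall>x\<in>?D. SigFun ?D ?f x = ?f x" using SigFun_const[OF eSig] by blast
  show ?thesis unfolding collapsed_at_def
    using o1 o2 ePi eSig pd sd f1 f2 by blast
qed

theorem corollary5p33:
  fixes L :: "'v::lattice set" and \<phi> :: "'v \<Rightarrow> 'e::ordered_ab_group_add" and w :: "'i::wellorder"
  assumes "sigma_distributive TYPE('v)"
    and "sublattice L"
    and "R_complete TYPE('e)"
    and "valuation_on L \<phi>"
    and "is_aleph1 w"
  shows "((\<exists>(\<alpha>::'i) Q. collapsed_at L \<phi> \<alpha> Q) \<longleftrightarrow> ok_of (PiH L \<phi> w)) \<and>
         ((\<exists>(\<alpha>::'i) Q. collapsed_at L \<phi> \<alpha> Q) \<longrightarrow>
            (\<forall>(\<alpha>::'i) Q. collapsed_at L \<phi> \<alpha> Q \<longrightarrow>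
               dom_of Q = dom_of (PiH L \<phi> w) \<and>
               (\<forall>x\<in>dom_of Q. fun_of Q x = fun_of (PiH L \<phi> w) x)))"
proof -
  note vL = assms(4) and al = assms(5)
  have l: "lim_ord w" using aleph_lim[OF al] .
  have okw: "ok_of (PiH L \<phi> w)" if col: "collapsed_at L \<phi> \<alpha> Q" for \<alpha> :: 'i and Q
  proof (cases "\<alpha> < w")
    case True thus ?thesis using collapse_prop[OF col True True] by (simp add: ok2_def)
  next
    case False
    hence "w \<le> \<alpha>" by simp
    thus ?thesis using OKB[OF col_ok2[OF col]] by (simp add: ok2_def)
  qed
  have eqw: "eqv Q (PiH L \<phi> w)" if col: "collapsed_at L \<phi> \<alpha> Q" for \<alpha> :: 'i and Q
  proof -
    consider "\<alpha> < w" | "\<alpha> = w" | "w < \<alpha>" using neq_iff by blast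
    thus ?thesis
    proof cases
      case 1 thus ?thesis using collapse_prop[OF col 1 1] eqv_sym by blast
    next
      case 2
      have ok2w: "ok2 L \<phi> w" using col_ok2[OF col] 2 by simp
      have "Q = PiH L \<phi> w \<or> Q = SigH L \<phi> w" using col 2 unfolding collapsed_at_def by blast
      thus ?thesis using LimEq[OF l ok2w] eqv_sym sub_refl unfolding eqv_def by blast
    next
      case 3
      have cw: "collapsed_at L \<phi> w (PiH L \<phi> w)" using Dcol[OF al vL okw[OF col]] .
      have "Q = PiH L \<phi> \<alpha> \<or> Q = SigH L \<phi> \<alpha>" using col unfolding collapsed_at_def by blast
      thus ?thesis using collapse_prop[OF cw 3 3] by blast
    qed
  qed
  show ?thesis
  proof (intro conjI impI allI)
    show "(\<exists>(\<alpha>::'i) Q. collapsed_at L \<phi> \<alpha> Q) = ok_of (PiH L \<phi> w)"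
    proof
      assume "\<exists>(\<alpha>::'i) Q. collapsed_at L \<phi> \<alpha> Q"
      then obtain \<alpha> :: 'i and Q where "collapsed_at L \<phi> \<alpha> Q" by blast
      thus "ok_of (PiH L \<phi> w)" using okw by blast
    next
      assume "ok_of (PiH L \<phi> w)"
      thus "\<exists>(\<alpha>::'i) Q. collapsed_at L \<phi> \<alpha> Q" using Dcol[OF al vL] by blast
    qed
    fix \<alpha> :: 'i and Q assume col: "collapsed_at L \<phi> \<alpha> Q"
    show "dom_of Q = dom_of (PiH L \<phi> w)" using eqv_dom[OF eqw[OF col]] .
    show "\<forall>x\<in>dom_of Q. fun_of Q x = fun_of (PiH L \<phi> w) x"
      using eqv_fun[OF eqv_sym[OF eqw[OF col]]] eqv_dom[OF eqw[OF col]] by auto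
  qed
qed

end
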